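(* Let $f_1,f_2$ be strongly hyperbolic functions and let $p_1,p_2,p_3\in\mathbb{R}^2$ be three points in admissible position. Then either there exist $a_0>0$, $b_0,c_0\in\mathbb{R}$ such that $\overline{f_{a_0,b_0,c_0}}$ contains $p_1,p_2,p_3$, or there exist $s_0<0$, $t_0\in\mathbb{R}$ such that $\overline{l_{s_0,t_0}}$ contains $p_1,p_2,p_3$.
   Context: Identify $\mathbb{S}^1$ with $\mathbb{R}\cup\{\infty\}$, $\mathcal{P}=\mathbb{S}^1\times\mathbb{S}^1\supset\mathbb{R}^2$, $\mathbb{R}^+=(0,\infty)$. A function $f:\mathbb{R}^+\to\mathbb{R}^+$ is strongly hyperbolic if: (1) $\lim_{x\to0+}f(x)=+\infty$, $\lim_{x\to+\infty}f(x)=0$; (2) $f$ strictly convex; (3) $\lim_{x\to+\infty}f(x+b)/f(x)=1$ for each $b\in\mathbb{R}$; (4) $f$ differentiable; (5) $\ln|f'|$ strictly convex. For $a>0$, $b,c\in\mathbb{R}$: $f_{a,b,c}(x)=af_1(x+b)+c$ for $x>-b$, $f_{a,b,c}(x)=-af_2(-x-b)+c$ for $x<-b$; $\overline{f_{a,b,c}}=\{(x,f_{a,b,c}(x)):x\ne-b\}\cup\{(-b,\infty),(\infty,c)\}$; $\overline{l_{s,t}}=\{(x,sx+t):x\in\mathbb{R}\}\cup\{(\infty,\infty)\}$. Three points are in admissible position if they are all contained in one set of the form $\{(x,sx+t):x\in\mathbb{R}\}\cup\{(\infty,\infty)\}$ with $s<0$, or of the form $\{(x,y)\in\mathbb{R}^2:(x-b)(y-c)=a\}\cup\{(\infty,c),(b,\infty)\}$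 with $a>0$, $b,c\in\mathbb{R}$. *)

theory Defs
  imports "HOL-Analysis.Analysis"
begin

text \<open>The circle S^1 = R \<union> {\<infinity>}, as an extended real line with one point at infinity.\<close>
datatype ext = Fin real | Infty

definition strictly_convex_on :: "real set \<Rightarrow> (real \<Rightarrow> real) \<Rightarrow> bool" where
  "strictly_convex_on S f \<longleftrightarrow>
     (\<forall>x\<in>S. \<forall>y\<in>S. \<forall>t. x \<noteq> y \<and> 0 < t \<and> t < 1 \<longrightarrow>
        f (t * x + (1 - t) * y) < t * f x + (1 - t) * f y)"

text \<open>Strongly hyperbolic functions R^+ \<rightarrow> R^+ (values outside (0,\<infinity>) irrelevant).\<close>
definition strongly_hyperbolic :: "(real \<Rightarrow> real) \<Rightarrow> bool" where
  "strongly_hyperbolic f \<longleftrightarrow>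
     (\<forall>x>0. f x > 0) \<and>
     filterlim f at_top (at_right 0) \<and>
     (f \<longlongrightarrow> 0) at_top \<and>
     strictly_convex_on {0<..} f \<and>
     (\<forall>b::real. ((\<lambda>x. f (x + b) / f x) \<longlongrightarrow> 1) at_top) \<and>
     (\<forall>x>0. f differentiable (at x)) \<and>
     strictly_convex_on {0<..} (\<lambda>x. ln \<bar>deriv f x\<bar>)"

definition fabc :: "(real \<Rightarrow> real) \<Rightarrow> (real \<Rightarrow> real) \<Rightarrow> real \<Rightarrow> real \<Rightarrow> real \<Rightarrow> real \<Rightarrow> real" where
  "fabc f1 f2 a b c x = (if x > - b then a * f1 (x + b) + c else - a * f2 (- x - b) + c)"

definition fabc_closure :: "(real \<Rightarrow> real) \<Rightarrow> (real \<Rightarrow> real) \<Rightarrow> real \<Rightarrow> real \<Rightarrow> real \<Rightarrow> (ext \<times> ext) set" where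
  "fabc_closure f1 f2 a b c =
     {(Fin x, Fin (fabc f1 f2 a b c x)) | x. x \<noteq> - b} \<union> {(Fin (- b), Infty), (Infty, Fin c)}"

definition line_closure :: "real \<Rightarrow> real \<Rightarrow> (ext \<times> ext) set" where
  "line_closure s t = {(Fin x, Fin (s * x + t)) | x. True} \<union> {(Infty, Infty)}"

definition hyperbola_closure :: "real \<Rightarrow> real \<Rightarrow> real \<Rightarrow> (ext \<times> ext) set" where
  "hyperbola_closure a b c =
     {(Fin x, Fin y) | x y. (x - b) * (y - c) = a} \<union> {(Infty, Fin c), (Fin b, Infty)}"

definition admissible_position :: "ext \<times> ext \<Rightarrow> ext \<times> ext \<Rightarrow> ext \<times> ext \<Rightarrow> bool" where
  "admissible_position p1 p2 p3 \<longleftrightarrow>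
     (\<exists>s t. s < 0 \<and> {p1, p2, p3} \<subseteq> line_closure s t) \<or>
     (\<exists>a b c. a > 0 \<and> {p1, p2, p3} \<subseteq> hyperbola_closure a b c)"

end

theory Submission
  imports Defs
begin

lemma sh_basic:
  assumes h: "strongly_hyperbolic g"
  shows "\<forall>x>0. g x > 0" and "filterlim g at_top (at_right 0)"
    and "(g \<longlongrightarrow> 0) at_top"
    and "\<And>x. x > 0 \<Longrightarrow> (g has_real_derivative deriv g x) (at x)"
    and "continuous_on {0<..} g"
    and "\<And>x y. x > 0 \<Longrightarrow> y > 0 \<Longrightarrow> g y - g x \<ge> deriv g x * (y - x)"
    and "\<And>x. x > 0 \<Longrightarrow> deriv g x < 0"
    and "\<And>x y. 0 < x \<Longrightarrow> x < y \<Longrightarrow> g y < g x"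
    and "((\<lambda>x. g (x + D) / g x) \<longlongrightarrow> 1) at_top"
proof -
  show pos: "\<forall>x>0. g x > 0" and lim0: "filterlim g at_top (at_right 0)"
    and liminf: "(g \<longlongrightarrow> 0) at_top"
    and "((\<lambda>x. g (x + D) / g x) \<longlongrightarrow> 1) at_top"
    using h unfolding strongly_hyperbolic_def by auto
  show der: "\<And>x. x > 0 \<Longrightarrow> (g has_real_derivative deriv g x) (at x)"
    using h unfolding strongly_hyperbolic_def
    by (simp add: DERIV_deriv_iff_real_differentiable)
  show cont: "continuous_on {0<..} g"
    by (metis DERIV_isCont continuous_at_imp_continuous_on der greaterThan_iff)
  have cvx: "convex_on {0<..} g"
  proof (rule convex_onI)
    fix t x y :: real assume t: "0 < t" "t < 1" and xy: "x \<in> {0<..}" "y \<in> {0<..}"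
    have sc: "strictly_convex_on {0<..} g" using h unfolding strongly_hyperbolic_def by auto
    show "g ((1 - t) *\<^sub>R x + t *\<^sub>R y) \<le> (1 - t) * g x + t * g y"
    proof (cases "x = y")
      case True thus ?thesis by (simp add: algebra_simps)
    next
      case False
      have "g ((1 - t) * x + (1 - (1 - t)) * y) < (1 - t) * g x + (1 - (1 - t)) * g y"
        using sc[unfolded strictly_convex_on_def, rule_format, of x y "1-t"] xy False t by auto
      thus ?thesis by simp
    qed
  qed simp
  show tan: "\<And>x y. x > 0 \<Longrightarrow> y > 0 \<Longrightarrow> g y - g x \<ge> deriv g x * (y - x)"
  proof -
    fix x y :: real assume "x > 0" "y > 0"
    show "g y - g x \<ge> deriv g x * (y - x)"
      apply (rule convex_on_imp_above_tangent[OF cvx])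
      using \<open>x > 0\<close> \<open>y > 0\<close> der[of x] by (auto simp: has_field_derivative_at_within interior_open)
  qed
  show dneg: "\<And>x. x > 0 \<Longrightarrow> deriv g x < 0"
  proof (rule ccontr)
    fix x :: real assume x: "x > 0" and "\<not> deriv g x < 0"
    have "\<forall>y>x. g y \<ge> g x"
    proof (intro allI impI)
      fix y assume "y > x"
      have "deriv g x * (y - x) \<ge> 0" using \<open>\<not> deriv g x < 0\<close> \<open>y > x\<close> by simp
      moreover have "g y - g x \<ge> deriv g x * (y - x)" using tan[OF x] x \<open>y > x\<close> by simp
      ultimately show "g y \<ge> g x" by linarith
    qed
    hence ev: "eventually (\<lambda>y. g y \<ge> g x) at_top" by (auto simp: eventually_at_top_dense)
    have "g x \<le> 0" using tendsto_lowerbound[OF liminf ev] by simp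
    thus False using pos x by auto
  qed
  show "\<And>x y. 0 < x \<Longrightarrow> x < y \<Longrightarrow> g y < g x"
  proof -
    fix x y :: real assume "0 < x" "x < y"
    show "g y < g x"
      apply (rule DERIV_neg_imp_decreasing_open[OF \<open>x < y\<close>])
      using \<open>0 < x\<close> der dneg apply (meson less_trans)
      using \<open>0 < x\<close> by (auto intro: continuous_on_subset[OF cont])
  qed
qed

lemma small_big:
  fixes g :: "real \<Rightarrow> real"
  assumes "filterlim g at_top (at_right (0::real))" "e > 0"
  shows "\<exists>u>0. u < e \<and> g u > M"
proof -
  have "\<forall>Z. eventually (\<lambda>x. Z < g x) (at_right 0)"
    using filterlim_at_top_dense[THEN iffD1, OF assms(1)] .
  hence "eventually (\<lambda>u. M < g u) (at_right 0)" by (rule spec)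
  hence "\<exists>b>0. \<forall>y>0. y < b \<longrightarrow> M < g y" by (simp only: eventually_at_right_field)
  then obtain b where b: "b > 0" "\<And>y. y > 0 \<Longrightarrow> y < b \<Longrightarrow> M < g y"
    by blast
  show ?thesis
    apply (rule exI[of _ "min b e / 2"])
    using b assms(2) by auto
qed

lemma cont_at_pos:
  assumes "strongly_hyperbolic g" "x > 0"
  shows "isCont g x"
  using sh_basic(4)[OF assms] DERIV_isCont by blast

lemma cont_shift:
  assumes "strongly_hyperbolic g" "x + D > 0"
  shows "isCont (\<lambda>x. g (x + D)) x"
proof -
  have "isCont (\<lambda>x. x + D) x" by simp
  moreover have "isCont g (x + D)" using cont_at_pos[OF assms(1) assms(2)] .
  ultimately show ?thesis by (rule isCont_o2)
qed

lemma rrr: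
  assumes h: "strongly_hyperbolic g"
    and x: "x1 < x2" "x2 < x3" and y: "y1 > y2" "y2 > y3"
    and conv: "(y1 - y2) * (x3 - x2) > (y2 - y3) * (x2 - x1)"
  shows "\<exists>a b c. a > 0 \<and> x1 + b > 0 \<and> a * g (x1 + b) + c = y1
           \<and> a * g (x2 + b) + c = y2 \<and> a * g (x3 + b) + c = y3"
proof -
  define d1 where "d1 = x2 - x1"
  define d2 where "d2 = x3 - x2"
  define D where "D = d1 + d2"
  have d: "d1 > 0" "d2 > 0" "D > 0" using x by (auto simp: d1_def d2_def D_def)
  define K where "K = (y1 - y2) * d2 / ((y2 - y3) * d1)"
  have K1: "K > 1"
  proof -
    have "(y2 - y3) * d1 > 0" using y d by simp
    moreover have "(y1 - y2) * d2 > (y2 - y3) * d1" using conv by (simp add: d1_def d2_def)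
    ultimately show ?thesis unfolding K_def by simp
  qed
  note pos = sh_basic(1)[OF h] and der = sh_basic(4)[OF h] and tan = sh_basic(6)[OF h]
    and dneg = sh_basic(7)[OF h] and decr = sh_basic(8)[OF h]
  have step1: "\<exists>u0>0. - deriv g u0 < K * (- deriv g (u0 + D))"
  proof (rule ccontr)
    assume "\<not> ?thesis"
    hence A: "\<And>u. u > 0 \<Longrightarrow> - deriv g u \<ge> K * (- deriv g (u + D))" by force
    define phi where "phi u = g (u + D) - g u / K" for u
    have mono: "phi u \<le> phi v" if "0 < u" "u \<le> v" for u v
    proof (rule DERIV_nonneg_imp_increasing_open[OF \<open>u \<le> v\<close>])
      fix z assume z: "u < z" "z < v"
      have "((\<lambda>z. g (z + D)) has_real_derivative deriv g (z + D)) (at z)"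
        using der[of "z + D"] z that d by (simp add: DERIV_shift)
      moreover have "((\<lambda>z. g z / K) has_real_derivative deriv g z / K) (at z)"
        using der[of z] z that by (intro DERIV_cdivide) auto
      ultimately have "(phi has_real_derivative (deriv g (z + D) * 1 - deriv g z / K)) (at z)"
        unfolding phi_def using DERIV_diff by fastforce
      moreover have "deriv g (z + D) * 1 - deriv g z / K \<ge> 0"
      proof -
        have "deriv g z \<le> K * deriv g (z + D)" using A[of z] z that by simp
        hence "deriv g z / K \<le> deriv g (z + D)" using K1 by (simp add: pos_divide_le_eq mult.commute)
        thus ?thesis by simp
      qed
      ultimately show "\<exists>y. (phi has_real_derivative y) (at z) \<and> 0 \<le> y" by blast
    next
      show "continuous_on {u..v} phi"
        unfolding phi_def
        apply (intro continuous_at_imp_continuous_on ballI continuous_intros)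
        using that d K1
        by (auto intro!: cont_shift[OF h] cont_at_pos[OF h])
    qed
    have sh: "LIM x at_top. x + D :> at_top"
      using filterlim_tendsto_add_at_top[OF tendsto_const[of D] filterlim_ident] by (simp add: add.commute)
    have l1: "((\<lambda>u. g (u + D)) \<longlongrightarrow> 0) at_top"
      using filterlim_compose[OF sh_basic(3)[OF h] sh] .
    have philim: "(phi \<longlongrightarrow> 0 - 0 / K) at_top"
      unfolding phi_def
      using K1 by (intro tendsto_intros l1 sh_basic(3)[OF h]) auto
    have phinp: "phi u \<le> 0" if "u > 0" for u
    proof -
      have "eventually (\<lambda>v. phi v \<ge> phi u) at_top"
        by (rule eventually_mono[OF eventually_ge_at_top[of u]]) (rule mono[OF that])
      from tendsto_lowerbound[OF philim this] show ?thesis by simp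
    qed
    have "eventually (\<lambda>u. g (u + D) / g u \<le> 1 / K) at_top"
      using eventually_gt_at_top[of 0]
    proof (rule eventually_mono)
      fix u :: real assume "u > 0"
      have gu: "g u > 0" using pos \<open>u > 0\<close> by simp
      have "g (u + D) \<le> g u / K" using phinp[of u] \<open>u > 0\<close> unfolding phi_def by simp
      hence "g (u + D) / g u \<le> (g u / K) / g u" using gu by (intro divide_right_mono) auto
      thus "g (u + D) / g u \<le> 1 / K" using gu by simp
    qed
    from tendsto_upperbound[OF sh_basic(9)[OF h, of D] this] have "1 \<le> 1 / K" by simp
    thus False using K1 by (simp add: le_divide_eq_1_pos)
  qed
  then obtain u0 where u0: "u0 > 0" "- deriv g u0 < K * (- deriv g (u0 + D))" by blast
  define F where "F u = (y2 - y3) * (g u - g (u + d1)) - (y1 - y2) * (g (u + d1) - g (u + D))" for u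
  have F0: "F u0 < 0"
  proof -
    define P where "P = - deriv g u0"
    define Q where "Q = - deriv g (u0 + D)"
    have PQ: "P < K * Q" "Q > 0" using u0 dneg[of "u0 + D"] d by (auto simp: P_def Q_def)
    have t1: "g u0 - g (u0 + d1) \<le> P * d1" using tan[of u0 "u0 + d1"] u0 d by (simp add: P_def)
    have t2: "g (u0 + d1) - g (u0 + D) \<ge> Q * d2" using tan[of "u0 + D" "u0 + d1"] u0 d
      by (simp add: Q_def D_def algebra_simps)
    have "(y2 - y3) * (g u0 - g (u0 + d1)) \<le> (y2 - y3) * (P * d1)"
      using t1 y by (intro mult_left_mono) auto
    also have "\<dots> < (y2 - y3) * (K * Q * d1)"
      using PQ y d by (intro mult_strict_left_mono) auto
    also have "\<dots> = (y1 - y2) * (Q * d2)"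
    proof -
      have "K * ((y2 - y3) * d1) = (y1 - y2) * d2" using y d unfolding K_def by simp
      thus ?thesis by (metis mult.commute mult.left_commute)
    qed
    also have "\<dots> \<le> (y1 - y2) * (g (u0 + d1) - g (u0 + D))"
      using t2 y by (intro mult_left_mono) auto
    finally show ?thesis unfolding F_def by simp
  qed
  define M where "M = max (g u0) ((y1 - y3) * g d1 / (y2 - y3))"
  obtain u1 where u1: "u1 > 0" "g u1 > M" using small_big[OF sh_basic(2)[OF h], of 1 M] by auto
  have u1u0: "u1 < u0"
  proof (rule ccontr)
    assume "\<not> u1 < u0"
    hence "g u1 \<le> g u0" using decr[of u0 u1] u0 by (cases "u1 = u0") auto
    thus False using u1 unfolding M_def by auto
  qed
  have F1: "F u1 > 0"
  proof -
    have "g (u1 + d1) \<le> g d1" using decr[of d1 "u1 + d1"] u1 d by auto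
    moreover have "g (u1 + D) > 0" using pos u1 d by auto
    moreover have "(y2 - y3) * g u1 > (y1 - y3) * g d1"
      using u1 y unfolding M_def by (simp add: pos_divide_less_eq mult.commute)
    ultimately have "(y2 - y3) * g u1 > (y2 - y3) * g (u1 + d1) + (y1 - y2) * g (u1 + d1) - (y1 - y2) * g (u1 + D)"
    proof -
      have "(y1 - y2) * g (u1 + D) > 0" using y \<open>g (u1 + D) > 0\<close> by simp
      moreover have "(y1 - y3) * g (u1 + d1) \<le> (y1 - y3) * g d1"
        using \<open>g (u1 + d1) \<le> g d1\<close> y by (intro mult_left_mono) auto
      ultimately show ?thesis using \<open>(y2 - y3) * g u1 > (y1 - y3) * g d1\<close>
        by (simp add: algebra_simps)
    qed
    thus ?thesis unfolding F_def by (simp add: algebra_simps)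
  qed
  have Fcont: "continuous_on {u1..u0} F"
    unfolding F_def
    apply (intro continuous_at_imp_continuous_on ballI continuous_intros)
    using u1 d
    by (auto intro!: cont_shift[OF h] cont_at_pos[OF h])
  obtain u where u: "u1 \<le> u" "u \<le> u0" "F u = 0"
    using IVT2'[of F u0 0 u1, OF _ _ _ Fcont] F0 F1 u1u0 by auto
  have upos: "u > 0" using u u1 by auto
  define A where "A = g u - g (u + d1)"
  have Apos: "A > 0" using decr[of u "u + d1"] upos d by (simp add: A_def)
  define a where "a = (y1 - y2) / A"
  define c where "c = y1 - a * g u"
  have e: "x3 + (u - x1) = u + D" "x2 + (u - x1) = u + d1" by (simp_all add: D_def d1_def d2_def)
  have aA: "a * A = y1 - y2" using Apos by (simp add: a_def)
  have FA: "(y1 - y2) * (g (u + d1) - g (u + D)) = (y2 - y3) * A" using u(3) by (simp add: F_def A_def)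
  have "x1 + (u - x1) > 0" using upos by simp
  moreover have "a > 0" using Apos y by (simp add: a_def)
  moreover have "a * g (x1 + (u - x1)) + c = y1" by (simp add: c_def)
  moreover have "a * g (x2 + (u - x1)) + c = y2"
    unfolding e c_def using aA by (simp add: A_def algebra_simps)
  moreover have "a * g (x3 + (u - x1)) + c = y3"
  proof -
    have "a * (g (u + d1) - g (u + D)) = y2 - y3"
    proof -
      have "a * (g (u + d1) - g (u + D)) = (y1 - y2) * (g (u + d1) - g (u + D)) / A" by (simp add: a_def)
      also have "\<dots> = y2 - y3" using FA Apos by simp
      finally show ?thesis .
    qed
    thus ?thesis unfolding e c_def using aA by (simp add: A_def algebra_simps)
  qed
  ultimately show ?thesis by (intro exI[of _ a] exI[of _ "u - x1"] exI[of _ c]) (simp only:)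
qed

lemma cont_refl:
  assumes "strongly_hyperbolic g" "d - x > 0"
  shows "isCont (\<lambda>x. g (d - x)) x"
proof -
  have "isCont (\<lambda>x. d - x) x" by simp
  moreover have "isCont g (d - x)" using cont_at_pos[OF assms(1) assms(2)] .
  ultimately show ?thesis by (rule isCont_o2)
qed

lemma lrr:
  assumes h1: "strongly_hyperbolic g1" and h2: "strongly_hyperbolic g2"
    and x: "x1 < x2" "x2 < x3" and y: "y1 < y3" "y3 < y2"
  shows "\<exists>a b c. a > 0 \<and> x1 + b < 0 \<and> x2 + b > 0 \<and> a * g1 (x2 + b) + c = y2
           \<and> a * g1 (x3 + b) + c = y3 \<and> - a * g2 (- x1 - b) + c = y1"
proof -
  define d where "d = x2 - x1"
  define e where "e = x3 - x2"
  have de: "d > 0" "e > 0" using x by (auto simp: d_def e_def)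
  note pos1 = sh_basic(1)[OF h1] and decr1 = sh_basic(8)[OF h1]
  note pos2 = sh_basic(1)[OF h2] and decr2 = sh_basic(8)[OF h2]
  define H where "H u = (y2 - y3) * (g1 u + g2 (d - u)) - (y2 - y1) * (g1 u - g1 (u + e))" for u
  define M1 where "M1 = ((y2 - y3) * g2 (d / 2) + (y2 - y1) * g1 e) / (y3 - y1)"
  obtain u1 where u1: "u1 > 0" "u1 < d / 2" "g1 u1 > M1"
    using small_big[OF sh_basic(2)[OF h1], of "d / 2" M1] de by auto
  have H1: "H u1 < 0"
  proof -
    have a1: "g2 (d - u1) \<le> g2 (d / 2)" using decr2[of "d / 2" "d - u1"] u1 de by auto
    have a2: "g1 (u1 + e) > 0" using pos1 u1 de by auto
    have a3: "(y3 - y1) * g1 u1 > (y2 - y3) * g2 (d / 2) + (y2 - y1) * g1 e"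
      using u1 y unfolding M1_def by (simp add: pos_divide_less_eq mult.commute)
    have a4: "g1 (u1 + e) \<le> g1 e" using decr1[of e "u1 + e"] u1 de by auto
    have "(y2 - y3) * g2 (d - u1) \<le> (y2 - y3) * g2 (d / 2)" using a1 y by (intro mult_left_mono) auto
    moreover have "(y2 - y1) * g1 (u1 + e) \<le> (y2 - y1) * g1 e" using a4 y by (intro mult_left_mono) auto
    ultimately show ?thesis using a3 unfolding H_def by (simp add: algebra_simps)
  qed
  define M2 where "M2 = (y2 - y1) * g1 (d / 2) / (y2 - y3)"
  obtain v where v: "v > 0" "v < d / 2" "g2 v > M2"
    using small_big[OF sh_basic(2)[OF h2], of "d / 2" M2] de by auto
  define u2 where "u2 = d - v"
  have u2: "u2 > d / 2" "u2 < d" using v by (auto simp: u2_def)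
  have H2: "H u2 > 0"
  proof -
    have b1: "g1 u2 \<le> g1 (d / 2)" using decr1[of "d / 2" u2] u2 de by auto
    have b2: "g1 u2 > 0" "g1 (u2 + e) > 0" using pos1 u2 de by auto
    have b3: "(y2 - y3) * g2 v > (y2 - y1) * g1 (d / 2)"
      using v y unfolding M2_def by (simp add: pos_divide_less_eq mult.commute)
    have "(y2 - y1) * g1 u2 \<le> (y2 - y1) * g1 (d / 2)" using b1 y by (intro mult_left_mono) auto
    moreover have "(y2 - y3) * g1 u2 > 0" "(y2 - y1) * g1 (u2 + e) > 0" using b2 y by auto
    moreover have "d - u2 = v" by (simp add: u2_def)
    ultimately show ?thesis using b3 unfolding H_def by (simp add: algebra_simps)
  qed
  have Hcont: "continuous_on {u1..u2} H"
    unfolding H_def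
    apply (intro continuous_at_imp_continuous_on ballI continuous_intros)
    using u1 u2 de
    by (auto intro!: cont_shift[OF h1] cont_at_pos[OF h1] cont_refl[OF h2])
  obtain u where u: "u1 \<le> u" "u \<le> u2" "H u = 0"
    using IVT'[of H u1 0 u2, OF _ _ _ Hcont] H1 H2 u1 u2 by auto
  have upos: "u > 0" "u < d" using u u1 u2 by auto
  define A where "A = g1 u - g1 (u + e)"
  have Apos: "A > 0" using decr1[of u "u + e"] upos de by (simp add: A_def)
  define a where "a = (y2 - y3) / A"
  define c where "c = y2 - a * g1 u"
  have ee: "x2 + (u - x2) = u" "x3 + (u - x2) = u + e" "- x1 - (u - x2) = d - u" "x1 + (u - x2) = u - d"
    by (simp_all add: d_def e_def)
  have aA: "a * A = y2 - y3" using Apos by (simp add: a_def)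
  have HA: "(y2 - y3) * (g1 u + g2 (d - u)) = (y2 - y1) * A" using u(3) by (simp add: H_def A_def)
  have "x1 + (u - x2) < 0" using upos by (simp add: ee)
  moreover have "x2 + (u - x2) > 0" using upos by simp
  moreover have "a > 0" using Apos y by (simp add: a_def)
  moreover have "a * g1 (x2 + (u - x2)) + c = y2" by (simp add: c_def)
  moreover have "a * g1 (x3 + (u - x2)) + c = y3"
    unfolding ee c_def using aA by (simp add: A_def algebra_simps)
  moreover have "- a * g2 (- x1 - (u - x2)) + c = y1"
  proof -
    have "a * (g1 u + g2 (d - u)) = (y2 - y3) * (g1 u + g2 (d - u)) / A" by (simp add: a_def)
    also have "\<dots> = y2 - y1" using HA Apos by simp
    finally have "a * (g1 u + g2 (d - u)) = y2 - y1" .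
    thus ?thesis unfolding ee c_def by (simp add: algebra_simps)
  qed
  ultimately show ?thesis by (intro exI[of _ a] exI[of _ "u - x2"] exI[of _ c]) (simp only:)
qed

lemma hyp_conv:
  fixes p1 p2 p3 q1 q2 q3 a :: real
  assumes p: "0 < p1" "p1 < p2" "p2 < p3" and a: "a > 0"
    and q: "p1 * q1 = a" "p2 * q2 = a" "p3 * q3 = a"
  shows "q1 > q2" "q2 > q3" "q3 > 0" "(q1 - q2) * (p3 - p2) > (q2 - q3) * (p2 - p1)"
proof -
  have qq: "q1 = a / p1" "q2 = a / p2" "q3 = a / p3" using q p by (auto simp: field_simps)
  show "q1 > q2" "q2 > q3" "q3 > 0" unfolding qq using p a by (auto intro!: divide_strict_left_mono)
  have e1: "q1 - q2 = a * (p2 - p1) / (p1 * p2)" unfolding qq using p by (simp add: field_simps)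
  have e2: "q2 - q3 = a * (p3 - p2) / (p2 * p3)" unfolding qq using p by (simp add: field_simps)
  have "a * (p2 - p1) * (p3 - p2) / p2 > 0" using p a by simp
  hence "a * (p2 - p1) * (p3 - p2) / p2 / p3 < a * (p2 - p1) * (p3 - p2) / p2 / p1"
    using p by (intro divide_strict_left_mono) auto
  thus "(q1 - q2) * (p3 - p2) > (q2 - q3) * (p2 - p1)" unfolding e1 e2
    by (simp add: field_simps)
qed

lemma mem_right:
  assumes "x + b0 > 0" "a0 * f1 (x + b0) + c0 = y"
  shows "(Fin x, Fin y) \<in> fabc_closure f1 f2 a0 b0 c0"
proof -
  have "x \<noteq> - b0" "fabc f1 f2 a0 b0 c0 x = y" using assms by (auto simp: fabc_def)
  hence "(Fin x, Fin y) \<in> {(Fin x, Fin (fabc f1 f2 a0 b0 c0 x)) | x. x \<noteq> - b0}" by blast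
  thus ?thesis unfolding fabc_closure_def by (rule UnI1)
qed

lemma mem_left:
  assumes "x + b0 < 0" "- a0 * f2 (- x - b0) + c0 = y"
  shows "(Fin x, Fin y) \<in> fabc_closure f1 f2 a0 b0 c0"
proof -
  have "x \<noteq> - b0" "fabc f1 f2 a0 b0 c0 x = y" using assms by (auto simp: fabc_def)
  hence "(Fin x, Fin y) \<in> {(Fin x, Fin (fabc f1 f2 a0 b0 c0 x)) | x. x \<noteq> - b0}" by blast
  thus ?thesis unfolding fabc_closure_def by (rule UnI1)
qed

lemma sorted_case:
  assumes h1: "strongly_hyperbolic f1" and h2: "strongly_hyperbolic f2"
    and x: "x1 < x2" "x2 < x3" and a: "a > 0"
    and hy: "(x1 - b) * (y1 - c) = a" "(x2 - b) * (y2 - c) = a" "(x3 - b) * (y3 - c) = a"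
  shows "\<exists>a0 b0 c0. a0 > 0 \<and> (Fin x1, Fin y1) \<in> fabc_closure f1 f2 a0 b0 c0
     \<and> (Fin x2, Fin y2) \<in> fabc_closure f1 f2 a0 b0 c0 \<and> (Fin x3, Fin y3) \<in> fabc_closure f1 f2 a0 b0 c0"
proof -
  have nb: "x1 \<noteq> b" "x2 \<noteq> b" "x3 \<noteq> b" using hy a by auto
  consider "b < x1" | "x1 < b" "b < x2" | "x2 < b" "b < x3" | "x3 < b"
    using nb x by linarith
  thus ?thesis
  proof cases
    case 1
    note H = hyp_conv[of "x1 - b" "x2 - b" "x3 - b" a "y1 - c" "y2 - c" "y3 - c"]
    have "y1 > y2" "y2 > y3" "(y1 - y2) * (x3 - x2) > (y2 - y3) * (x2 - x1)"
      using H(1,2,4) 1 x a hy by auto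
    from rrr[OF h1 x this] obtain a0 b0 c0 where r: "a0 > 0" "x1 + b0 > 0"
      "a0 * f1 (x1 + b0) + c0 = y1" "a0 * f1 (x2 + b0) + c0 = y2" "a0 * f1 (x3 + b0) + c0 = y3"
      by blast
    have "x2 + b0 > 0" "x3 + b0 > 0" using r x by auto
    thus ?thesis using r by (intro exI[of _ a0] exI[of _ b0] exI[of _ c0]) (auto intro!: mem_right)
  next
    case 4
    note H = hyp_conv[of "b - x3" "b - x2" "b - x1" a "c - y3" "c - y2" "c - y1"]
    have hy': "(b - x3) * (c - y3) = a" "(b - x2) * (c - y2) = a" "(b - x1) * (c - y1) = a"
      using hy by (simp_all add: algebra_simps)
    have "- x3 < - x2" "- x2 < - x1" using x by auto
    moreover have "- y3 > - y2" "- y2 > - y1" "(- y3 - - y2) * (- x1 - - x2) > (- y2 - - y1) * (- x2 - - x3)"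
      using H(1,2,4) 4 x a hy' by auto
    ultimately obtain a0 b0 c0 where r: "a0 > 0" "- x3 + b0 > 0"
      "a0 * f2 (- x3 + b0) + c0 = - y3" "a0 * f2 (- x2 + b0) + c0 = - y2" "a0 * f2 (- x1 + b0) + c0 = - y1"
      using rrr[OF h2, of "- x3" "- x2" "- x1" "- y2" "- y3" "- y1"] by blast
    have m: "x + - b0 < 0" "- a0 * f2 (- x - (- b0)) + - c0 = y"
      if "x \<le> x3" "a0 * f2 (- x + b0) + c0 = - y" for x y
      using that r by auto
    show ?thesis using r x
      by (intro exI[of _ a0] exI[of _ "- b0"] exI[of _ "- c0"]) (auto intro!: mem_left m)
  next
    case 2
    have q: "y2 - c = a / (x2 - b)" "y3 - c = a / (x3 - b)" using hy(2,3) 2 x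
      by (simp_all add: eq_divide_eq mult.commute)
    have "a / (x3 - b) < a / (x2 - b)" using a 2 x by (intro divide_strict_left_mono) auto
    moreover have "a / (x3 - b) > 0" using a 2 x by simp
    ultimately have "y3 > c" "y2 > y3" using q by linarith+
    moreover have "y1 < c"
    proof -
      have "(b - x1) * (y1 - c) = - a" using hy by (simp add: algebra_simps)
      moreover have "(b - x1) * (y1 - c) \<ge> 0" if "y1 \<ge> c" using that 2 by simp
      ultimately show ?thesis using a by force
    qed
    ultimately have "y1 < y3" "y3 < y2" by auto
    from lrr[OF h1 h2 x this] obtain a0 b0 c0 where r: "a0 > 0" "x1 + b0 < 0" "x2 + b0 > 0"
      "a0 * f1 (x2 + b0) + c0 = y2" "a0 * f1 (x3 + b0) + c0 = y3" "- a0 * f2 (- x1 - b0) + c0 = y1"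
      by blast
    have "x3 + b0 > 0" using r x by auto
    have m1: "(Fin x1, Fin y1) \<in> fabc_closure f1 f2 a0 b0 c0" by (rule mem_left) (use r in auto)
    have m2: "(Fin x2, Fin y2) \<in> fabc_closure f1 f2 a0 b0 c0" by (rule mem_right) (use r in auto)
    have m3: "(Fin x3, Fin y3) \<in> fabc_closure f1 f2 a0 b0 c0"
      by (rule mem_right) (use r \<open>x3 + b0 > 0\<close> in auto)
    show ?thesis using r(1) m1 m2 m3 by blast
  next
    case 3
    have hy': "(b - x2) * (c - y2) = a" "(b - x1) * (c - y1) = a"
      using hy by (simp_all add: algebra_simps)
    have q: "c - y2 = a / (b - x2)" "c - y1 = a / (b - x1)" using hy' 3 x
      by (simp_all add: eq_divide_eq mult.commute)
    have "a / (b - x1) < a / (b - x2)" using a 3 x by (intro divide_strict_left_mono) auto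
    moreover have "a / (b - x1) > 0" using a 3 x by simp
    ultimately have "c - y1 > 0" "c - y2 > c - y1" using q by linarith+
    moreover have "y3 > c"
      using zero_less_mult_pos[of "x3 - b" "y3 - c"] hy(3) 3 a by simp
    ultimately have yy: "- y3 < - y1" "- y1 < - y2" by auto
    have "- x3 < - x2" "- x2 < - x1" using x by auto
    from lrr[OF h2 h1 this yy] obtain a0 b0 c0 where r: "a0 > 0" "- x3 + b0 < 0" "- x2 + b0 > 0"
      "a0 * f2 (- x2 + b0) + c0 = - y2" "a0 * f2 (- x1 + b0) + c0 = - y1" "- a0 * f1 (- (- x3) - b0) + c0 = - y3"
      by blast
    have m: "x + - b0 < 0" "- a0 * f2 (- x - (- b0)) + - c0 = y"
      if "x \<le> x2" "a0 * f2 (- x + b0) + c0 = - y" for x y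
      using that r by auto
    have m3: "x3 + - b0 > 0" "a0 * f1 (x3 + - b0) + - c0 = y3" using r by auto
    have n1: "(Fin x1, Fin y1) \<in> fabc_closure f1 f2 a0 (- b0) (- c0)"
      by (rule mem_left) (use m[of x1 y1] r x in auto)
    have n2: "(Fin x2, Fin y2) \<in> fabc_closure f1 f2 a0 (- b0) (- c0)"
      by (rule mem_left) (use m[of x2 y2] r x in auto)
    have n3: "(Fin x3, Fin y3) \<in> fabc_closure f1 f2 a0 (- b0) (- c0)"
      by (rule mem_right) (use m3 in auto)
    show ?thesis using r(1) n1 n2 n3 by blast
  qed
qed

lemma hyp_mem:
  assumes "(Fin x, Fin y) \<in> hyperbola_closure a b c"
  shows "(x - b) * (y - c) = a"
  using assms unfolding hyperbola_closure_def by auto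

lemma hyp_x_inj:
  fixes x1 x2 y1 y2 a b c :: real
  assumes "(x1 - b) * (y1 - c) = a" "(x2 - b) * (y2 - c) = a" "a > 0" "x1 = x2"
  shows "y1 = y2"
proof -
  have "x1 - b \<noteq> 0"
  proof
    assume "x1 - b = 0"
    hence "a = 0" using assms(1) by (metis mult_zero_left)
    thus False using assms(3) by simp
  qed
  hence "y1 - c = y2 - c" using assms by (metis mult_left_cancel)
  thus ?thesis by simp
qed

theorem lemma4p7:
  fixes f1 f2 :: "real \<Rightarrow> real" and x1 y1 x2 y2 x3 y3 :: real
  assumes "strongly_hyperbolic f1" and "strongly_hyperbolic f2"
    and "distinct [(x1, y1), (x2, y2), (x3, y3)]"
    and "admissible_position (Fin x1, Fin y1) (Fin x2, Fin y2) (Fin x3, Fin y3)"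
  shows "(\<exists>a0 b0 c0. a0 > 0 \<and>
            {(Fin x1, Fin y1), (Fin x2, Fin y2), (Fin x3, Fin y3)} \<subseteq> fabc_closure f1 f2 a0 b0 c0)
       \<or> (\<exists>s0 t0. s0 < 0 \<and>
            {(Fin x1, Fin y1), (Fin x2, Fin y2), (Fin x3, Fin y3)} \<subseteq> line_closure s0 t0)"
proof (cases "\<exists>s t. s < 0 \<and> {(Fin x1, Fin y1), (Fin x2, Fin y2), (Fin x3, Fin y3)} \<subseteq> line_closure s t")
  case True thus ?thesis by blast
next
  case False
  then obtain a b c where abc: "a > 0"
    "{(Fin x1, Fin y1), (Fin x2, Fin y2), (Fin x3, Fin y3)} \<subseteq> hyperbola_closure a b c"
    using assms(4) unfolding admissible_position_def by blast
  have hy: "(x1 - b) * (y1 - c) = a" "(x2 - b) * (y2 - c) = a" "(x3 - b) * (y3 - c) = a"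
    using abc(2) by (auto intro: hyp_mem)
  have dx: "x1 \<noteq> x2" "x1 \<noteq> x3" "x2 \<noteq> x3"
    using assms(3) hyp_x_inj[OF hy(1) hy(2) abc(1)] hyp_x_inj[OF hy(1) hy(3) abc(1)]
      hyp_x_inj[OF hy(2) hy(3) abc(1)] by auto
  note S = sorted_case[OF assms(1,2) _ _ abc(1)]
  have "\<exists>a0 b0 c0. a0 > 0 \<and>
            {(Fin x1, Fin y1), (Fin x2, Fin y2), (Fin x3, Fin y3)} \<subseteq> fabc_closure f1 f2 a0 b0 c0"
  proof -
    consider "x1 < x2" "x2 < x3" | "x1 < x3" "x3 < x2" | "x2 < x1" "x1 < x3"
      | "x2 < x3" "x3 < x1" | "x3 < x1" "x1 < x2" | "x3 < x2" "x2 < x1"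
      using dx by linarith
    thus ?thesis
    proof cases
      case 1 from S[OF this hy(1,2,3)] show ?thesis by blast
    next
      case 2 from S[OF this hy(1,3,2)] show ?thesis by blast
    next
      case 3 from S[OF this hy(2,1,3)] show ?thesis by blast
    next
      case 4 from S[OF this hy(2,3,1)] show ?thesis by blast
    next
      case 5 from S[OF this hy(3,1,2)] show ?thesis by blast
    next
      case 6 from S[OF this hy(3,2,1)] show ?thesis by blast
    qed
  qed
  thus ?thesis by blast
qed

end
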